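(* Let $n\ge1$, equip $\{0,1\}^n$ with the uniform probability measure, and for $k=0,\dots,n$ let $\mathcal{F}^*_k$ be the product of the trivial $\sigma$-algebra on $\{0,1\}^k$ (first $k$ coordinates) and the full $\sigma$-algebra on $\{0,1\}^{n-k}$ (last $n-k$ coordinates); put $\mathcal{F}^*_{n+1}=\mathcal{F}^*_n$, and write $\mathbb{E}^*_k=\mathbb{E}(\cdot\mid\mathcal{F}^*_k)$. Then there is no constant $C$ (independent of $n$) such that for all $n$ and all $f_0,\dots,f_n\in L^1(\{0,1\}^n)$ satisfying $\mathbb{E}^*_{k+1}f_k=0$ for $k=0,\dots,n$, one has \[C\,\mathbb{E}\Big(\sum_{k=0}^n|f_k|^2\Big)^{1/2}\ge\mathbb{E}\Big(\sum_{k=0}^n|\mathbb{E}^*_kf_k|^2\Big)^{1/2}.\] *)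

theory Defs
  imports Complex_Main
begin

text \<open>The discrete cube {0,1}^n, points represented as boolean lists of length n
  (coordinate i is the i-th list entry, True = 1).\<close>
definition cube :: "nat \<Rightarrow> bool list set" where
  "cube n = {xs. length xs = n}"

definition cube_exp :: "nat \<Rightarrow> (bool list \<Rightarrow> real) \<Rightarrow> real" where
  "cube_exp n f = (\<Sum>x\<in>cube n. f x) / 2 ^ n"

text \<open>Conditional expectation E(f | F*_k) on {0,1}^n, where F*_k is trivial on the
  first k coordinates and full on the last n-k; F*_{k} = F*_n for k > n.
  Since every point has positive mass, it is given pointwise by averaging over the
  first min k n coordinates.\<close>
definition cexp_star :: "nat \<Rightarrow> nat \<Rightarrow> (bool list \<Rightarrow> real) \<Rightarrow> bool list \<Rightarrow> real" where
  "cexp_star n k f x =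
     (\<Sum>y\<in>cube (min k n). f (y @ drop (min k n) x)) / 2 ^ (min k n)"

end

theory Submission
  imports Defs
begin

fun oddall :: "bool list \<Rightarrow> bool" where
  "oddall [] = True" | "oddall [a] = True" | "oddall (a#b#xs) = (b \<and> oddall xs)"

lemma oddall_append: "even (length xs) \<Longrightarrow> oddall (xs @ ys) = (oddall xs \<and> oddall ys)"
  by (induction xs rule: oddall.induct) auto

definition sg :: "bool \<Rightarrow> real" where "sg b = (if b then 1 else -1)"

lemma finite_cube[simp]: "finite (cube n)"
proof -
  have "cube n = {xs. set xs \<subseteq> (UNIV::bool set) \<and> length xs = n}" by (auto simp: cube_def)
  thus ?thesis using finite_lists_length_eq[of "UNIV::bool set" n] by simp
qed

lemma cube_0: "cube 0 = {[]}" by (auto simp: cube_def)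

lemma cube_Suc: "cube (Suc n) = (\<lambda>(b,y). b#y) ` (UNIV \<times> cube n)"
  by (auto simp: cube_def image_iff length_Suc_conv)

lemma sum_cube_Suc: "(\<Sum>w\<in>cube (Suc n). F w) = (\<Sum>y\<in>cube n. F (True#y) + F (False#y))"
proof -
  have inj: "inj_on (\<lambda>(b,y). b#y) (UNIV \<times> cube n)" by (auto simp: inj_on_def)
  have "(\<Sum>w\<in>cube (Suc n). F w) = (\<Sum>p\<in>UNIV \<times> cube n. F ((\<lambda>(b,y). b#y) p))"
    unfolding cube_Suc using sum.reindex[OF inj, of F] by (simp add: comp_def)
  also have "\<dots> = (\<Sum>b\<in>UNIV. \<Sum>y\<in>cube n. F (b#y))"
    by (simp add: sum.cartesian_product split_def)
  also have "\<dots> = (\<Sum>y\<in>cube n. F (True#y) + F (False#y))"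
    by (simp add: UNIV_bool sum.distrib add.commute)
  finally show ?thesis .
qed

lemma sum_cube_add: "(\<Sum>w\<in>cube (a+b). F w) = (\<Sum>y\<in>cube a. \<Sum>z\<in>cube b. F (y@z))"
proof (induction a arbitrary: F)
  case 0
  then show ?case by (simp add: cube_0)
next
  case (Suc a)
  show ?case by (simp add: sum_cube_Suc sum.distrib Suc.IH)
qed

lemma count_oddall: "(\<Sum>y\<in>cube (2*i). if oddall y then 1 else 0 :: real) = 2^i"
proof (induction i)
  case 0
  then show ?case by (simp add: cube_0)
next
  case (Suc i)
  have e: "2 * Suc i = Suc (Suc (2*i))" by simp
  show ?case unfolding e by (simp add: sum_cube_Suc sum.distrib Suc.IH)
qed

definition FF :: "nat \<Rightarrow> nat \<Rightarrow> bool list \<Rightarrow> real" where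
  "FF m k x = (if even k \<and> k < 2*m \<and> oddall x then 2^m * sg (x!k) else 0)"

lemma constr:
  assumes x: "x \<in> cube (2*m)"
  shows "cexp_star (2*m) (k+1) (FF m k) x = 0"
proof (cases "even k \<and> k < 2*m")
  case False
  then have "FF m k = (\<lambda>_. 0)" by (auto simp: FF_def fun_eq_iff)
  then show ?thesis by (simp add: cexp_star_def)
next
  case True
  have mn: "min (Suc k) (2*m) = Suc k" using True by simp
  have "Suc k < 2*m" using True by presburger
  then have "length (drop (k+1) x) > 0" using x by (simp add: cube_def)
  then obtain d r where dr: "drop (k+1) x = d#r" by (cases "drop (k+1) x") auto
  have c1: "cube 1 = {[True],[False]}" by (auto simp: cube_def length_Suc_conv)
  have "(\<Sum>y\<in>cube (k+1). FF m k (y @ drop (k+1) x))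
      = (\<Sum>y\<in>cube k. \<Sum>z\<in>cube 1. FF m k ((y@z) @ drop (k+1) x))"
    by (rule sum_cube_add)
  also have "\<dots> = 0"
  proof (rule sum.neutral, rule ballI)
    fix y assume y: "y \<in> cube k"
    have ly: "length y = k" using y by (simp add: cube_def)
    show "(\<Sum>z\<in>cube 1. FF m k ((y@z) @ drop (k+1) x)) = 0"
      using True ly c1 dr by (simp add: FF_def oddall_append nth_append sg_def)
  qed
  finally show ?thesis using mn by (simp add: cexp_star_def)
qed

lemma gval:
  assumes x: "x \<in> cube (2*m)" and i: "i < m"
  shows "cexp_star (2*m) (2*i) (FF m (2*i)) x
       = 2^(m-i) * sg (x!(2*i)) * (if oddall (drop (2*i) x) then 1 else 0)"
proof -
  have lx: "length x = 2*m" using x by (simp add: cube_def)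
  have mn: "min (2*i) (2*m) = 2*i" using i by simp
  define c where "c = 2^m * sg (x!(2*i)) * (if oddall (drop (2*i) x) then 1 else 0 :: real)"
  have "\<forall>y\<in>cube (2*i). FF m (2*i) (y @ drop (2*i) x) = c * (if oddall y then 1 else 0)"
  proof
    fix y assume y: "y \<in> cube (2*i)"
    have ly: "length y = 2*i" using y by (simp add: cube_def)
    have "(y @ drop (2*i) x) ! (2*i) = x ! (2*i)" using ly lx i by (simp add: nth_append)
    then show "FF m (2*i) (y @ drop (2*i) x) = c * (if oddall y then 1 else 0)"
      using ly i by (simp add: FF_def c_def oddall_append)
  qed
  then have S: "(\<Sum>y\<in>cube (2*i). FF m (2*i) (y @ drop (2*i) x)) = c * 2^i"
    by (simp add: sum_distrib_left[symmetric] count_oddall)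
  have P: "(2::real)^m * 2^i / 2^(2*i) = 2^(m-i)"
  proof -
    have "(2::real)^m = 2^(m-i) * 2^i" using i by (simp add: power_add[symmetric])
    moreover have "(4::real)^i = 2^i * 2^i" using power_mult_distrib[of "2::real" 2 i] by simp
    ultimately show ?thesis by (simp add: power_mult)
  qed
  have "cexp_star (2*m) (2*i) (FF m (2*i)) x = c * 2^i / 2^(2*i)"
    unfolding cexp_star_def mn S ..
  also have "\<dots> = (2^m * 2^i / 2^(2*i)) * (sg (x!(2*i)) * (if oddall (drop (2*i) x) then 1 else 0))"
    unfolding c_def by simp
  finally show ?thesis unfolding P by simp
qed

lemma four_pow: "(4::real)^k = 2^k * 2^k"
  using power_mult_distrib[of "2::real" 2 k] by simp

lemma sum_even:
  fixes h :: "nat \<Rightarrow> 'a::comm_monoid_add" and m :: nat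
  shows "(\<Sum>k\<le>2*m. if even k \<and> k < 2*m then h k else 0) = (\<Sum>i<m. h (2*i))"
proof -
  have A: "(\<Sum>k\<le>2*m. if even k \<and> k < 2*m then h k else 0) = (\<Sum>k<2*m. if even k then h k else 0)"
    unfolding lessThan_Suc_atMost[symmetric] sum.lessThan_Suc by (simp; rule sum.cong; auto)
  have B: "(\<Sum>k<2*m. if even k then h k else 0) = (\<Sum>i<m. h (2*i))" by (induction m) auto
  show ?thesis using A B by simp
qed

lemma sqrt4: "sqrt ((4::real)^k) = 2^k"
proof -
  have "(4::real)^k = (2^k)^2" by (simp add: four_pow power2_eq_square)
  thus ?thesis by simp
qed

lemma lhs_sum:
  assumes x: "x \<in> cube (2*m)"
  shows "(\<Sum>k\<le>2*m. \<bar>FF m k x\<bar>^2) = (if oddall x then real m * 4^m else 0)"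
proof -
  have "\<And>k. \<bar>FF m k x\<bar>^2 = (if even k \<and> k < 2*m then (if oddall x then 4^m else 0) else 0)"
    by (simp add: FF_def sg_def power_mult_distrib four_pow power2_eq_square)
  hence "(\<Sum>k\<le>2*m. \<bar>FF m k x\<bar>^2) = (\<Sum>k\<le>2*m. if even k \<and> k < 2*m then (if oddall x then (4::real)^m else 0) else 0)"
    by simp
  also have "\<dots> = (\<Sum>i<m. (if oddall x then (4::real)^m else 0))" by (rule sum_even)
  finally show ?thesis by simp
qed

definition Q :: "nat \<Rightarrow> bool list \<Rightarrow> real" where
  "Q m x = (\<Sum>i<m. 4^(m-i) * (if oddall (drop (2*i) x) then 1 else 0))"

lemma rhs_sum:
  assumes x: "x \<in> cube (2*m)"
  shows "(\<Sum>k\<le>2*m. \<bar>cexp_star (2*m) k (FF m k) x\<bar>^2) = Q m x"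
proof -
  have "\<And>k. \<bar>cexp_star (2*m) k (FF m k) x\<bar>^2 = (if even k \<and> k < 2*m then
           4^(m - k div 2) * (if oddall (drop (2*(k div 2)) x) then 1 else 0) else 0)"
  proof -
    fix k
    show "\<bar>cexp_star (2*m) k (FF m k) x\<bar>^2 = (if even k \<and> k < 2*m then
           4^(m - k div 2) * (if oddall (drop (2*(k div 2)) x) then 1 else 0) else 0)"
    proof (cases "even k \<and> k < 2*m")
      case False
      then have "FF m k = (\<lambda>_. 0)" by (auto simp: FF_def fun_eq_iff)
      then show ?thesis using False by (simp add: cexp_star_def)
    next
      case True
      then obtain i where k: "k = 2*i" and i: "i < m" by (auto elim!: evenE)
      have "(2::real)^(m-i) * 2^(m-i) = 4^(m-i)"
        by (simp add: four_pow)
      then show ?thesis using gval[OF x i] True unfolding k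
        by (simp add: power2_eq_square sg_def abs_mult)
    qed
  qed
  hence "(\<Sum>k\<le>2*m. \<bar>cexp_star (2*m) k (FF m k) x\<bar>^2) = (\<Sum>k\<le>2*m. if even k \<and> k < 2*m then
           (\<lambda>k. (4::real)^(m - k div 2) * (if oddall (drop (2*(k div 2)) x) then 1 else 0)) k else 0)"
    by simp
  also have "\<dots> = Q m x" unfolding sum_even Q_def by simp
  finally show ?thesis .
qed

lemma Q_Suc: "Q (Suc m) x = 4^(Suc m) * (if oddall x then 1 else 0) + Q m (drop 2 x)"
  unfolding Q_def sum.lessThan_Suc_shift by simp

lemma Q_nonneg: "0 \<le> Q m x"
  unfolding Q_def by (intro sum_nonneg) auto

lemma Q_bound: "Q m x \<le> 4^(Suc m)"
proof (induction m arbitrary: x)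
  case 0
  then show ?case by (simp add: Q_def)
next
  case (Suc m)
  have h0: "(0::real) \<le> 4^m" by simp
  have "Q (Suc m) x \<le> 4^(Suc m) + 4^(Suc m)"
  proof -
    have "(4::real)^(Suc m) * (if oddall x then 1 else 0) \<le> 4^(Suc m)" by simp
    thus ?thesis unfolding Q_Suc using Suc.IH[of "drop 2 x"] by linarith
  qed
  then show ?case using h0 by (simp; linarith)
qed

lemma sqrt_gain:
  fixes q a :: real
  assumes "0 \<le> q" "q \<le> a"
  shows "sqrt q + sqrt a / 4 \<le> sqrt (a + q)"
proof (rule real_le_rsqrt)
  have a0: "0 \<le> a" using assms by linarith
  have sa: "sqrt q \<le> sqrt a" using assms by simp
  have "sqrt q * sqrt a \<le> sqrt a * sqrt a"
    using sa a0 by (intro mult_right_mono) auto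
  hence "sqrt q * sqrt a \<le> a" using assms by simp
  moreover have "(sqrt q + sqrt a / 4)^2 = q + sqrt q * sqrt a / 2 + a / 16"
    using assms by (simp add: power2_eq_square algebra_simps)
  moreover have "0 \<le> a" using assms by linarith
  ultimately show "(sqrt q + sqrt a / 4)^2 \<le> a + q" by simp
qed

lemma S_bound: "real m * 4^m \<le> 4 * (\<Sum>x\<in>cube (2*m). sqrt (Q m x))"
proof (induction m)
  case 0
  then show ?case by (simp add: Q_def)
next
  case (Suc m)
  have e: "2 * Suc m = Suc (Suc (2*m))" by simp
  have pt: "4 * sqrt (Q m z) + 2^m * (if oddall z then 1 else 0)
     \<le> 2 * sqrt (4^(Suc m) * (if oddall z then 1 else 0) + Q m z) + 2 * sqrt (Q m z)" for z
  proof (cases "oddall z")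
    case True
    have "sqrt (Q m z) + sqrt (4^(Suc m)) / 4 \<le> sqrt (4^(Suc m) + Q m z)"
      using Q_nonneg Q_bound by (rule sqrt_gain)
    then show ?thesis using True unfolding sqrt4 by simp
  qed simp
  have "(\<Sum>x\<in>cube (2*Suc m). sqrt (Q (Suc m) x))
      = (\<Sum>z\<in>cube (2*m). 2 * sqrt (4^(Suc m) * (if oddall z then 1 else 0) + Q m z) + 2 * sqrt (Q m z))"
    unfolding e by (simp add: sum_cube_Suc Q_Suc)
  also have "\<dots> \<ge> (\<Sum>z\<in>cube (2*m). 4 * sqrt (Q m z) + 2^m * (if oddall z then 1 else 0))"
    by (intro sum_mono pt)
  finally have "(\<Sum>x\<in>cube (2*Suc m). sqrt (Q (Suc m) x))
      \<ge> 4 * (\<Sum>z\<in>cube (2*m). sqrt (Q m z)) + 2^m * 2^m"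
    by (simp add: sum.distrib sum_distrib_left[symmetric] count_oddall)
  moreover have "(2::real)^m * 2^m = 4^m" by (simp add: four_pow)
  ultimately show ?case using Suc.IH by (simp add: algebra_simps)
qed

theorem theorem1p4:
  shows "\<not> (\<exists>C::real. \<forall>n::nat. \<forall>f :: nat \<Rightarrow> bool list \<Rightarrow> real.
            n \<ge> 1 \<longrightarrow>
            (\<forall>k\<le>n. \<forall>x\<in>cube n. cexp_star n (k + 1) (f k) x = 0) \<longrightarrow>
            C * cube_exp n (\<lambda>x. sqrt (\<Sum>k\<le>n. \<bar>f k x\<bar> ^ 2))
              \<ge> cube_exp n (\<lambda>x. sqrt (\<Sum>k\<le>n. \<bar>cexp_star n k (f k) x\<bar> ^ 2)))"
proof
  assume "\<exists>C::real. \<forall>n::nat. \<forall>f :: nat \<Rightarrow> bool list \<Rightarrow> real.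
            n \<ge> 1 \<longrightarrow>
            (\<forall>k\<le>n. \<forall>x\<in>cube n. cexp_star n (k + 1) (f k) x = 0) \<longrightarrow>
            C * cube_exp n (\<lambda>x. sqrt (\<Sum>k\<le>n. \<bar>f k x\<bar> ^ 2))
              \<ge> cube_exp n (\<lambda>x. sqrt (\<Sum>k\<le>n. \<bar>cexp_star n k (f k) x\<bar> ^ 2))"
  then obtain C :: real where H: "\<forall>n::nat. \<forall>f :: nat \<Rightarrow> bool list \<Rightarrow> real.
            n \<ge> 1 \<longrightarrow>
            (\<forall>k\<le>n. \<forall>x\<in>cube n. cexp_star n (k + 1) (f k) x = 0) \<longrightarrow>
            C * cube_exp n (\<lambda>x. sqrt (\<Sum>k\<le>n. \<bar>f k x\<bar> ^ 2))
              \<ge> cube_exp n (\<lambda>x. sqrt (\<Sum>k\<le>n. \<bar>cexp_star n k (f k) x\<bar> ^ 2))" by blast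
  define m where "m = nat \<lceil>16*C^2\<rceil> + 1"
  have m1: "1 \<le> 2*m" by (simp add: m_def)
  have "16*C^2 \<le> real (nat \<lceil>16*C^2\<rceil>)" by (rule real_nat_ceiling_ge)
  hence mC: "16*C^2 < real m" unfolding m_def by (simp only: of_nat_add of_nat_1)
  have cons: "\<forall>k\<le>2*m. \<forall>x\<in>cube (2*m). cexp_star (2*m) (k+1) (FF m k) x = 0"
    using constr by blast
  have ineq: "C * cube_exp (2*m) (\<lambda>x. sqrt (\<Sum>k\<le>2*m. \<bar>FF m k x\<bar> ^ 2))
      \<ge> cube_exp (2*m) (\<lambda>x. sqrt (\<Sum>k\<le>2*m. \<bar>cexp_star (2*m) k (FF m k) x\<bar> ^ 2))"
    using H m1 cons by blast
  have p2: "(2::real)^(2*m) = 4^m" by (simp add: four_pow power_add mult_2)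
  have "\<forall>x\<in>cube (2*m). sqrt (\<Sum>k\<le>2*m. \<bar>FF m k x\<bar> ^ 2) = (sqrt (real m) * 2^m) * (if oddall x then 1 else 0)"
    using lhs_sum by (simp add: real_sqrt_mult sqrt4)
  hence "(\<Sum>x\<in>cube (2*m). sqrt (\<Sum>k\<le>2*m. \<bar>FF m k x\<bar> ^ 2)) = sqrt (real m) * 2^m * 2^m"
    by (simp add: sum_distrib_left[symmetric] count_oddall)
  hence L: "cube_exp (2*m) (\<lambda>x. sqrt (\<Sum>k\<le>2*m. \<bar>FF m k x\<bar> ^ 2)) = sqrt (real m)"
    unfolding cube_exp_def p2 by (simp add: four_pow)
  have "(\<Sum>x\<in>cube (2*m). sqrt (\<Sum>k\<le>2*m. \<bar>cexp_star (2*m) k (FF m k) x\<bar> ^ 2))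
        = (\<Sum>x\<in>cube (2*m). sqrt (Q m x))"
    using rhs_sum by (intro sum.cong) auto
  hence R: "cube_exp (2*m) (\<lambda>x. sqrt (\<Sum>k\<le>2*m. \<bar>cexp_star (2*m) k (FF m k) x\<bar> ^ 2))
        \<ge> real m / 4"
  proof -
    assume eq: "(\<Sum>x\<in>cube (2*m). sqrt (\<Sum>k\<le>2*m. \<bar>cexp_star (2*m) k (FF m k) x\<bar> ^ 2))
        = (\<Sum>x\<in>cube (2*m). sqrt (Q m x))"
    have pos: "(0::real) < 4^m" by simp
    have "real m / 4 * 4^m \<le> (\<Sum>x\<in>cube (2*m). sqrt (Q m x))" using S_bound[of m] by simp
    hence "real m / 4 \<le> (\<Sum>x\<in>cube (2*m). sqrt (Q m x)) / 4^m"
      using pos by (simp only: pos_le_divide_eq)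
    thus ?thesis unfolding cube_exp_def p2 eq .
  qed
  have sm: "4 * \<bar>C\<bar> < sqrt (real m)"
  proof -
    have "sqrt (16*C^2) < sqrt (real m)" using mC by simp
    moreover have "sqrt (16*C^2) = 4*\<bar>C\<bar>" by (simp add: real_sqrt_mult)
    ultimately show ?thesis by simp
  qed
  have sq: "sqrt (real m) * sqrt (real m) = real m" by simp
  have spos: "0 < sqrt (real m)" using m1 by simp
  have "4 * \<bar>C\<bar> * sqrt (real m) < sqrt (real m) * sqrt (real m)"
    using mult_strict_right_mono[OF sm spos] .
  moreover have "C * sqrt (real m) \<le> \<bar>C\<bar> * sqrt (real m)"
    using spos by (intro mult_right_mono) auto
  ultimately have "C * sqrt (real m) < real m / 4" using sq by linarith
  moreover have "C * sqrt (real m) \<ge> real m / 4" using ineq R unfolding L by linarith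
  ultimately show False by linarith
qed

end
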